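(* Consider the multi-market oligopoly of equal capacity $\mathcal{G}$ described in the context, and suppose: each $u_x$ ($x\in E$) is concave and differentiable; $c$ is convex and differentiable; and at least one of the following holds: (a) all but at most one of the $u_x$ are strictly concave, or (b) $c$ is strictly convex. Then $\mathcal{G}$ has a unique pure-strategy Nash equilibrium $\mathbf{S}^*=(\mathbf{s}_i^* )_{i=1}^n$; it is symmetric ($\mathbf{s}_i^*=\mathbf{s}^*/n$ for all $i$), and its aggregate strategy $\mathbf{s}^*=\sum_{i=1}^n\mathbf{s}_i^*$ is the (unique) maximizer over $n\Delta^{m-1}$ of the potential function $$\Phi(\mathbf{s})=\sum_{x=1}^m\left[\left(1-\frac1n\right)\int_0^{s_x}\frac{u_x(t)}{t}\,\mathrm{d}t+\frac1n u_x(s_x)\right]-n\,c(\mathbf{s}/n).$$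
   Context: Let $N=\{1,\dots,n\}$ be a set of firms (players) and $E=\{1,\dots,m\}$ a set of markets. Let $\Delta^{m-1}=\{\mathbf{v}\in\mathbb{R}^m:\mathbf{v}\ge 0,\ \mathbf{v}^{T}\mathbf{1}=1\}$ and $n\Delta^{m-1}=\{\mathbf{s}\ge 0:\sum_x s_x=n\}$. Each firm $i$ chooses a strategy $\mathbf{s}_i=(s_{ix})_{x=1}^m\in S_i=\Delta^{m-1}$. For each market $x$ let $u_x:\mathbb{R}_{\ge 0}\to\mathbb{R}_{\ge 0}$ with $u_x(0)=0$, and let $p_x(t)=u_x(t)/t$ for $t>0$. Let $c:\Delta^{m-1}\to\mathbb{R}_{\ge 0}$ be a common cost function. For a strategy profile $\mathbf{S}=(\mathbf{s}_i)_{i=1}^n$ put $s_x=\sum_{i=1}^n s_{ix}$ and $\mathbf{s}_{-i}=\sum_{j\ne i}\mathbf{s}_j$. The payoff of player $i$ is $u_i(\mathbf{s}_i;\mathbf{s}_{-i})=\sum_{x=1}^m p_x(s_x)s_{ix}-c(\mathbf{s}_i)$ (a term with $s_x=0$ is taken to be $0$). The game is $\mathcal{G}=(N,S,(u_i)_{i=1}^n)$ with $S=\prod_{i=1}^n\Delta^{m-1}$. *)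

theory Defs
  imports "HOL-Analysis.Analysis"
begin

text \<open>Markets are the elements of a finite type 'e (so m = CARD('e) \<ge> 1);
  strategies are vectors in real^'e. Players are 1..n.\<close>

definition strictly_convex_on :: "'a::real_vector set \<Rightarrow> ('a \<Rightarrow> real) \<Rightarrow> bool" where
  "strictly_convex_on S f \<longleftrightarrow> convex S \<and>
     (\<forall>x\<in>S. \<forall>y\<in>S. x \<noteq> y \<longrightarrow>
        (\<forall>t::real. 0 < t \<and> t < 1 \<longrightarrow> f ((1 - t) *\<^sub>R x + t *\<^sub>R y) < (1 - t) * f x + t * f y))"

definition strictly_concave_on :: "'a::real_vector set \<Rightarrow> ('a \<Rightarrow> real) \<Rightarrow> bool" where
  "strictly_concave_on S f \<longleftrightarrow> strictly_convex_on S (\<lambda>x. - f x)"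

definition unit_simplex :: "(real^'e::finite) set" where
  "unit_simplex = {v. (\<forall>x. 0 \<le> v $ x) \<and> (\<Sum>x\<in>UNIV. v $ x) = 1}"

definition scaled_simplex :: "nat \<Rightarrow> (real^'e::finite) set" where
  "scaled_simplex n = {s. (\<forall>x. 0 \<le> s $ x) \<and> (\<Sum>x\<in>UNIV. s $ x) = real n}"

definition aggregate :: "nat \<Rightarrow> (nat \<Rightarrow> real^'e::finite) \<Rightarrow> real^'e" where
  "aggregate n S = (\<Sum>i\<in>{1..n}. S i)"

text \<open>p_x(t) = u_x(t)/t; in Isabelle t/0 = 0, which realizes the convention that
  a term with s_x = 0 is 0.\<close>
definition price :: "('e \<Rightarrow> real \<Rightarrow> real) \<Rightarrow> 'e \<Rightarrow> real \<Rightarrow> real" where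
  "price u x t = u x t / t"

definition payoff ::
  "('e::finite \<Rightarrow> real \<Rightarrow> real) \<Rightarrow> (real^'e \<Rightarrow> real) \<Rightarrow> nat \<Rightarrow> (nat \<Rightarrow> real^'e) \<Rightarrow> nat \<Rightarrow> real" where
  "payoff u c n S i =
     (\<Sum>x\<in>UNIV. price u x (aggregate n S $ x) * (S i $ x)) - c (S i)"

definition is_pure_NE ::
  "('e::finite \<Rightarrow> real \<Rightarrow> real) \<Rightarrow> (real^'e \<Rightarrow> real) \<Rightarrow> nat \<Rightarrow> (nat \<Rightarrow> real^'e) \<Rightarrow> bool" where
  "is_pure_NE u c n S \<longleftrightarrow>
     (\<forall>i\<in>{1..n}. S i \<in> unit_simplex) \<and>
     (\<forall>i\<in>{1..n}. \<forall>t\<in>unit_simplex. payoff u c n (S(i := t)) i \<le> payoff u c n S i)"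

definition potential ::
  "('e::finite \<Rightarrow> real \<Rightarrow> real) \<Rightarrow> (real^'e \<Rightarrow> real) \<Rightarrow> nat \<Rightarrow> real^'e \<Rightarrow> real" where
  "potential u c n s =
     (\<Sum>x\<in>UNIV. (1 - 1 / real n) * integral {0 .. s $ x} (\<lambda>t. u x t / t)
                 + (1 / real n) * u x (s $ x))
     - real n * c ((1 / real n) *\<^sub>R s)"

end

theory Submission
  imports Defs
begin


lemma dir_lemma:
  fixes phi :: "real \<Rightarrow> real"
  assumes d: "(phi has_real_derivative D) (at 0 within {0..1})"
    and le: "\<And>t. 0 < t \<Longrightarrow> t \<le> 1 \<Longrightarrow> phi t - phi 0 \<le> t * K"
  shows "D \<le> K"
proof -
  have lim: "((\<lambda>y. (phi y - phi 0) / (y - 0)) \<longlongrightarrow> D) (at_right 0)"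
    using d by (simp add: has_field_derivative_iff at_within_Icc_at_right)
  have ev: "\<forall>\<^sub>F y in at_right 0. (phi y - phi 0) / (y - 0) \<le> K"
  proof -
    have "\<forall>\<^sub>F y in at_right (0::real). y < 1"
      unfolding eventually_at_right_field by (intro exI[of _ 1]) auto
    moreover have "\<forall>\<^sub>F y in at_right (0::real). 0 < y"
      by (simp add: eventually_at_right_less)
    ultimately show ?thesis
    proof eventually_elim
      case (elim y)
      then show ?case using le[of y] by (simp add: divide_le_eq mult.commute)
    qed
  qed
  show ?thesis
    by (rule tendsto_upperbound[OF lim ev]) simp
qed

lemma path_deriv:
  fixes f :: "'a::real_normed_vector \<Rightarrow> real"
  assumes d: "(f has_derivative D) (at x within S)"
    and sub: "\<And>t. t \<in> {0..1} \<Longrightarrow> x + t *\<^sub>R (y - x) \<in> S"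
  shows "((\<lambda>t. f (x + t *\<^sub>R (y - x))) has_real_derivative D (y - x)) (at 0 within {0..1})"
proof -
  have g: "((\<lambda>t::real. x + t *\<^sub>R (y - x)) has_derivative (\<lambda>h. h *\<^sub>R (y - x))) (at 0 within {0..1})"
    by (auto intro!: derivative_eq_intros)
  have d': "(f has_derivative D) (at ((\<lambda>t::real. x + t *\<^sub>R (y - x)) 0) within ((\<lambda>t::real. x + t *\<^sub>R (y - x)) ` {0..1}))"
  proof -
    have "(\<lambda>t::real. x + t *\<^sub>R (y - x)) ` {0..1} \<subseteq> S" using sub by auto
    then show ?thesis using has_derivative_subset[OF d] by simp
  qed
  have "((\<lambda>t. f (x + t *\<^sub>R (y - x))) has_derivative (\<lambda>h. D (h *\<^sub>R (y - x)))) (at 0 within {0..1})"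
    using has_derivative_in_compose[OF g d'] by simp
  moreover have "bounded_linear D" using d by (rule has_derivative_bounded_linear)
  then have "(\<lambda>h. D (h *\<^sub>R (y - x))) = (*) (D (y - x))"
    by (auto simp: linear_simps mult.commute)
  ultimately show ?thesis by (simp add: has_field_derivative_def)
qed

lemma convex_seg:
  fixes x y :: "'a::real_vector"
  shows "x + t *\<^sub>R (y - x) = (1 - t) *\<^sub>R x + t *\<^sub>R y"
  by (simp add: algebra_simps)

lemma tang:
  fixes f :: "'a::real_normed_vector \<Rightarrow> real"
  assumes cv: "convex_on S f" and xS: "x \<in> S" and yS: "y \<in> S"
    and d: "(f has_derivative D) (at x within S)"
  shows "D (y - x) \<le> f y - f x"
proof (rule dir_lemma)
  have cS: "convex S" using cv by (simp add: convex_on_def)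
  show "((\<lambda>t. f (x + t *\<^sub>R (y - x))) has_real_derivative D (y - x)) (at 0 within {0..1})"
    by (rule path_deriv[OF d]) (use cS xS yS in \<open>auto simp: convex_seg convex_alt\<close>)
  fix t :: real assume t: "0 < t" "t \<le> 1"
  have "f ((1 - t) *\<^sub>R x + t *\<^sub>R y) \<le> (1 - t) * f x + t * f y"
    using convex_onD[OF cv, of t x y] t xS yS by auto
  then show "f (x + t *\<^sub>R (y - x)) - f (x + 0 *\<^sub>R (y - x)) \<le> t * (f y - f x)"
    by (simp add: convex_seg algebra_simps)
qed

lemma tang_strict:
  fixes f :: "'a::real_normed_vector \<Rightarrow> real"
  assumes cv: "strictly_convex_on S f" and xS: "x \<in> S" and yS: "y \<in> S" and ne: "x \<noteq> y"
    and d: "(f has_derivative D) (at x within S)"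
  shows "D (y - x) < f y - f x"
proof -
  have cS: "convex S" using cv by (simp add: strictly_convex_on_def)
  have cv': "convex_on S f"
  proof (rule convex_onI[OF _ cS])
    fix t :: real and x y assume a: "0 < t" "t < 1" "x \<in> S" "y \<in> S"
    show "f ((1 - t) *\<^sub>R x + t *\<^sub>R y) \<le> (1 - t) * f x + t * f y"
    proof (cases "x = y")
      case True then show ?thesis by (simp add: algebra_simps)
    next
      case False
      then have "f ((1 - t) *\<^sub>R x + t *\<^sub>R y) < (1 - t) * f x + t * f y"
        using cv a unfolding strictly_convex_on_def by blast
      then show ?thesis by simp
    qed
  qed
  define m where "m = (1 - 1/2) *\<^sub>R x + (1/2::real) *\<^sub>R y"
  have mS: "m \<in> S" unfolding m_def
    by (rule convex_alt[THEN iffD1, OF cS, rule_format]) (use xS yS in auto)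
  have lt: "f m < (1 - 1/2) * f x + (1/2) * f y"
  proof -
    have "\<forall>t::real. 0 < t \<and> t < 1 \<longrightarrow> f ((1 - t) *\<^sub>R x + t *\<^sub>R y) < (1 - t) * f x + t * f y"
      using cv xS yS ne unfolding strictly_convex_on_def by blast
    then show ?thesis unfolding m_def by (metis field_sum_of_halves half_gt_zero_iff zero_less_one add_diff_cancel_right' less_add_same_cancel2)
  qed
  have "D (m - x) \<le> f m - f x" by (rule tang[OF cv' xS mS d])
  moreover have "m - x = (1/2::real) *\<^sub>R (y - x)"
  proof -
    have h: "(1/2::real) *\<^sub>R x + (1/2) *\<^sub>R x = x"
      by (metis scaleR_add_left field_sum_of_halves scaleR_one)
    show ?thesis unfolding m_def using h by (simp add: algebra_simps)
  qed
  moreover have "bounded_linear D" using d by (rule has_derivative_bounded_linear)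
  ultimately have "(1/2) * D (y - x) \<le> f m - f x" by (simp add: linear_simps)
  with lt show ?thesis by simp
qed

lemma deriv_at_pos:
  assumes "(f has_real_derivative D) (at y within {0..})" "0 < y"
  shows "(f has_real_derivative D) (at y)"
proof -
  have "(f has_real_derivative D) (at y within {0<..})"
    by (rule DERIV_subset[OF assms(1)]) auto
  then show ?thesis using at_within_open[of y "{0<..}"] assms(2) by simp
qed

lemma cont_from_deriv:
  assumes d: "\<And>y. 0 \<le> y \<Longrightarrow> (f has_real_derivative f' y) (at y within {0..})"
  shows "continuous_on {0..} f"
  unfolding continuous_on_eq_continuous_within
proof (intro ballI)
  fix y :: real assume "y \<in> {0..}"
  then show "continuous (at y within {0..}) f" using DERIV_continuous[OF d[of y]] by auto
qed

lemma conc_from_deriv: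
  fixes f f' :: "real \<Rightarrow> real"
  assumes d: "\<And>y. 0 \<le> y \<Longrightarrow> (f has_real_derivative f' y) (at y within {0..})"
    and mono: "\<And>y1 y2. 0 \<le> y1 \<Longrightarrow> y1 \<le> y2 \<Longrightarrow> f' y2 \<le> f' y1"
  shows "concave_on {0..} f"
  unfolding concave_on_def
proof (rule convex_on_linorderI)
  show "convex {0::real..}" by simp
  have cont: "continuous_on {0..} f" by (rule cont_from_deriv[OF d])
  have mvt': "\<exists>\<xi>. a < \<xi> \<and> \<xi> < b \<and> f b - f a = (b - a) * f' \<xi>" if ab: "0 \<le> a" "a < b" for a b
  proof -
    have c: "continuous_on {a..b} f" using continuous_on_subset[OF cont] ab by auto
    have "\<And>x. a < x \<Longrightarrow> x < b \<Longrightarrow> f differentiable (at x)"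
      using d deriv_at_pos ab real_differentiable_def by (metis less_eq_real_def order_le_less_trans)
    then obtain l z where lz: "a < z" "z < b" "DERIV f z :> l" "f b - f a = (b - a) * l"
      using MVT[OF ab(2) c] by blast
    have "DERIV f z :> f' z" using d[of z] deriv_at_pos[of f "f' z" z] lz ab by auto
    then have "l = f' z" using DERIV_unique lz(3) by blast
    then show ?thesis using lz by blast
  qed
  fix t x y :: real assume t: "0 < t" "t < 1" and xS: "x \<in> {0..}" and yS: "y \<in> {0..}" and xy: "x < y"
  define z where "z = (1 - t) *\<^sub>R x + t *\<^sub>R y"
  have zx: "z - x = t * (y - x)" and yz: "y - z = (1 - t) * (y - x)" unfolding z_def by (simp_all add: algebra_simps)
  have "x < z" using zx t xy by (simp add: algebra_simps) (metis diff_gt_0_iff_gt mult_pos_pos zx)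
  have "z < y" using yz t xy by (metis diff_gt_0_iff_gt mult_pos_pos yz)
  obtain \<xi>1 where x1: "x < \<xi>1" "\<xi>1 < z" "f z - f x = (z - x) * f' \<xi>1"
    using mvt'[of x z] xS \<open>x < z\<close> by auto
  obtain \<xi>2 where x2: "z < \<xi>2" "\<xi>2 < y" "f y - f z = (y - z) * f' \<xi>2"
    using mvt'[of z y] xS \<open>x < z\<close> \<open>z < y\<close> by auto
  have "f' \<xi>2 \<le> f' \<xi>1" using mono[of \<xi>1 \<xi>2] x1 x2 xS by auto
  then have "t * (1 - t) * (y - x) * f' \<xi>2 \<le> t * (1 - t) * (y - x) * f' \<xi>1"
    using t xy by (intro mult_left_mono) auto
  moreover have "(1 - t) * (f z - f x) = t * (1 - t) * (y - x) * f' \<xi>1"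
    using x1(3) zx by simp
  moreover have "t * (f y - f z) = t * (1 - t) * (y - x) * f' \<xi>2"
    using x2(3) yz by simp
  ultimately have "(1 - t) * (f z - f x) \<ge> t * (f y - f z)"
    by linarith
  then show "- f ((1 - t) *\<^sub>R x + t *\<^sub>R y) \<le> (1 - t) * - f x + t * - f y"
    unfolding z_def[symmetric] by (simp add: algebra_simps)
qed

lemma aux1:
  fixes t a G P :: real
  assumes "t \<noteq> 0"
  shows "(G * t - P * 1) / (t * t) * a + 1 * (P / t) = ((t - a) * (P / t) + a * G) / t"
  using assms by (simp add: field_simps)

lemma aux2:
  fixes N y W G :: real
  assumes "y \<noteq> 0" "N \<noteq> 0"
  shows "N * (((N * y - y) * W + y * G) / (N * y)) = (N - 1) * W + G"
  using assms by (simp add: field_simps)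

lemma aux3:
  fixes s A B p d :: real
  assumes "s \<noteq> 0"
  shows "((s - A) * p + A * d) / s * (B - A) + ((s - B) * p + B * d) / s * (A - B) = (A - B)^2 * (p - d) / s"
  using assms by (simp add: field_simps power2_eq_square)

locale cfun =
  fixes g gd :: "real \<Rightarrow> real"
  assumes g0: "g 0 = 0"
    and conc: "concave_on {0..} g"
    and der: "\<And>t. 0 \<le> t \<Longrightarrow> (g has_real_derivative gd t) (at t within {0..})"
begin

lemma tangent:
  assumes "0 \<le> x" "0 \<le> y"
  shows "g y \<le> g x + gd x * (y - x)"
proof -
  have cv: "convex_on {0..} (\<lambda>x. - g x)" using conc by (simp add: concave_on_def)
  have "((\<lambda>x. - g x) has_derivative (\<lambda>h. - (gd x * h))) (at x within {0..})"
    using der[OF assms(1)] by (auto simp: has_field_derivative_def intro!: derivative_eq_intros)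
  from tang[OF cv _ _ this, of y] assms show ?thesis by simp
qed

lemma gd_anti:
  assumes "0 \<le> x" "x \<le> y"
  shows "gd y \<le> gd x"
proof -
  have a: "g y \<le> g x + gd x * (y - x)" using tangent assms by simp
  have b: "g x \<le> g y + gd y * (x - y)" using tangent assms by simp
  have "0 \<le> (gd x - gd y) * (y - x)" using a b by (simp add: algebra_simps)
  then show ?thesis using assms
    by (cases "x = y") (auto simp: zero_le_mult_iff)
qed

lemma gd_le_slope:
  assumes "0 \<le> t"
  shows "gd t * t \<le> g t"
  using tangent[OF assms, of 0] by (simp add: g0)

lemma slope_le_gd0:
  assumes "0 \<le> t"
  shows "g t \<le> gd 0 * t"
  using tangent[of 0 t] assms by (simp add: g0)

lemma slope_anti:
  assumes "0 < s" "s \<le> t"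
  shows "g t / t \<le> g s / s"
proof -
  have "(1 - s/t) * g 0 + (s/t) * g t \<le> g ((1 - s/t) *\<^sub>R 0 + (s/t) *\<^sub>R t)"
    using concave_onD[OF conc, of "s/t" 0 t] assms by auto
  then have "(s/t) * g t \<le> g s" using assms by (simp add: g0)
  then have "s * (g t / t) \<le> g s" by simp
  then show ?thesis using assms by (simp add: le_divide_eq mult.commute)
qed

lemma g_nonneg_imp: "0 \<le> t \<Longrightarrow> gd t * t \<le> g t" by (rule gd_le_slope)

lemma gd_lt_slope:
  assumes sc: "strictly_concave_on {0..} g" and t: "0 < t"
  shows "gd t * t < g t"
proof -
  have cv: "strictly_convex_on {0..} (\<lambda>x. - g x)" using sc by (simp add: strictly_concave_on_def)
  have "((\<lambda>x. - g x) has_derivative (\<lambda>h. - (gd t * h))) (at t within {0..})"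
    using der[of t] t by (auto simp: has_field_derivative_def intro!: derivative_eq_intros)
  from tang_strict[OF cv _ _ _ this, of 0] t show ?thesis by (simp add: g0)
qed

definition q :: "real \<Rightarrow> real" where "q t = (if t = 0 then gd 0 else g t / t)"

lemma g_cont: "continuous_on {0..} g"
  by (rule cont_from_deriv[OF der])

lemma q_cont: "continuous_on {0..} q"
  unfolding continuous_on_eq_continuous_within
proof (intro ballI)
  fix t :: real assume "t \<in> {0..}"
  then have t: "0 \<le> t" by simp
  show "continuous (at t within {0..}) q"
  proof (cases "t = 0")
    case True
    have "((\<lambda>y. (g y - g 0) / (y - 0)) \<longlongrightarrow> gd 0) (at 0 within {0..})"
      using der[of 0] by (simp add: has_field_derivative_iff)
    then have "((\<lambda>y. g y / y) \<longlongrightarrow> gd 0) (at 0 within {0..})" by (simp add: g0)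
    then have "(q \<longlongrightarrow> gd 0) (at 0 within {0..})"
      by (rule Lim_transform_within[where d=1]) (auto simp: q_def)
    then show ?thesis using True by (simp add: continuous_within q_def)
  next
    case False
    then have tp: "0 < t" using t by simp
    have gc: "continuous (at t within {0..}) g" using DERIV_continuous[OF der[OF t]] .
    have "continuous (at t within {0..}) (\<lambda>y. g y / y)"
      using tp by (intro continuous_intros gc) auto
    then have "((\<lambda>y. g y / y) \<longlongrightarrow> g t / t) (at t within {0..})"
      by (simp add: continuous_within)
    then have "(q \<longlongrightarrow> g t / t) (at t within {0..})"
      by (rule Lim_transform_within[where d=t]) (use tp in \<open>auto simp: q_def dist_real_def\<close>)
    then show ?thesis using False by (simp add: continuous_within q_def)
  qed
qed

lemma q_anti:
  assumes "0 \<le> s" "s \<le> t"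
  shows "q t \<le> q s"
proof (cases "s = 0")
  case True
  then show ?thesis
  proof (cases "t = 0")
    case False
    then have "0 < t" using assms by simp
    then show ?thesis using True slope_le_gd0[of t] by (simp add: q_def divide_le_eq)
  qed (simp add: q_def)
next
  case False
  then show ?thesis using assms slope_anti[of s t] by (simp add: q_def)
qed

definition Q :: "real \<Rightarrow> real" where "Q z = integral {0..z} (\<lambda>t. g t / t)"

lemma Q_alt: "Q z = integral {0..z} q"
  unfolding Q_def
  by (rule integral_spike[of "{0}"]) (auto simp: q_def)

lemma within_ext:
  assumes "(f has_real_derivative D) (at z within {0..z+1})" "0 \<le> z"
  shows "(f has_real_derivative D) (at z within {0..})"
proof (cases "z = 0")
  case True
  then show ?thesis using assms(1) by (simp add: at_within_Icc_at_right at_within_Ici_at_right)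
next
  case False
  then have zp: "0 < z" using assms by simp
  have "(f has_real_derivative D) (at z within {0<..<z+1})"
    by (rule DERIV_subset[OF assms(1)]) auto
  then have "(f has_real_derivative D) (at z)" using at_within_open[of z "{0<..<z+1}"] zp by simp
  then show ?thesis by (rule has_field_derivative_at_within)
qed

lemma chain_aff:
  assumes d: "(f has_real_derivative D) (at (c * y + b) within {0..})"
    and c: "0 \<le> c" and b: "0 \<le> b" and y: "0 \<le> y"
  shows "((\<lambda>y. f (c * y + b)) has_real_derivative D * c) (at y within {0..})"
proof -
  have im: "(\<lambda>y. c * y + b) ` {0..} \<subseteq> {0..}" using c b by auto
  have d': "(f has_real_derivative D) (at ((\<lambda>y. c * y + b) y) within ((\<lambda>y. c * y + b) ` {0..}))"
    using DERIV_subset[OF d im] by simp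
  have l: "((\<lambda>y. c * y + b) has_real_derivative c) (at y within {0..})"
    by (auto intro!: derivative_eq_intros)
  show ?thesis using DERIV_image_chain[OF d' l] by (simp add: o_def)
qed

lemma Q_deriv:
  assumes "0 \<le> z"
  shows "(Q has_real_derivative q z) (at z within {0..})"
proof -
  have "continuous_on {0..z+1} q" using continuous_on_subset[OF q_cont] by auto
  then have "((\<lambda>x. integral {0..x} q) has_real_derivative q z) (at z within {0..z+1})"
    using assms by (intro integral_has_real_derivative) auto
  then have "(Q has_real_derivative q z) (at z within {0..z+1})"
    by (simp add: Q_alt[abs_def])
  then show ?thesis using within_ext assms by blast
qed


lemma Q_concave: "concave_on {0..} Q"
  by (rule conc_from_deriv[OF Q_deriv q_anti]) auto

definition F :: "real \<Rightarrow> real \<Rightarrow> real" where "F b a = g (a + b) / (a + b) * a"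

definition FD :: "real \<Rightarrow> real \<Rightarrow> real" where
  "FD b a = (if a + b = 0 then gd 0 else (b * (g (a + b) / (a + b)) + a * gd (a + b)) / (a + b))"

lemma F0: "F 0 y = g y"
  by (cases "y = 0") (auto simp: F_def g0)

lemma F_deriv:
  assumes a: "0 \<le> a" and b: "0 \<le> b"
  shows "(F b has_real_derivative FD b a) (at a within {0..})"
proof (cases "a + b = 0")
  case True
  then have "a = 0" "b = 0" using a b by auto
  then show ?thesis using der[of 0] by (simp add: F0[abs_def] FD_def)
next
  case False
  then have t: "0 < a + b" using a b by simp
  have dg: "((\<lambda>y. g (1 * y + b)) has_real_derivative gd (1 * a + b) * 1) (at a within {0..})"
    by (rule chain_aff) (use der a b in auto)
  then have dg': "((\<lambda>y. g (y + b)) has_real_derivative gd (a + b)) (at a within {0..})" by simp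
  have d3: "((\<lambda>y. g (y + b) / (y + b)) has_real_derivative
        (gd (a + b) * (a + b) - g (a + b) * 1) / ((a + b) * (a + b))) (at a within {0..})"
    by (rule DERIV_divide[OF dg']) (use t in \<open>auto intro!: derivative_eq_intros\<close>)
  have "((\<lambda>y. g (y + b) / (y + b) * y) has_real_derivative
        ((gd (a + b) * (a + b) - g (a + b) * 1) / ((a + b) * (a + b))) * a + 1 * (g (a + b) / (a + b)))
        (at a within {0..})"
    using DERIV_mult[OF d3 DERIV_ident] by simp
  moreover have "((gd (a + b) * (a + b) - g (a + b) * 1) / ((a + b) * (a + b))) * a + 1 * (g (a + b) / (a + b))
      = FD b a"
    using aux1[of "a + b" "gd (a + b)" "g (a + b)" a] t False unfolding FD_def by simp
  ultimately show ?thesis by (simp add: F_def[abs_def])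
qed

lemma gd_le_p: "0 < t \<Longrightarrow> gd t \<le> g t / t"
  using gd_le_slope[of t] by (simp add: le_divide_eq)

lemma FD_anti:
  assumes b: "0 \<le> b" and a1: "0 \<le> a1" and a12: "a1 \<le> a2"
  shows "FD b a2 \<le> FD b a1"
proof (cases "a1 + b = 0")
  case True
  then have z: "a1 = 0" "b = 0" using a1 b by auto
  show ?thesis
  proof (cases "a2 = 0")
    case True then show ?thesis using z by simp
  next
    case False
    then have "0 < a2" using a1 a12 by simp
    then show ?thesis using z gd_anti[of 0 a2] by (simp add: FD_def)
  qed
next
  case False
  define t1 where "t1 = a1 + b"
  define t2 where "t2 = a2 + b"
  have t1p: "0 < t1" using False a1 b unfolding t1_def by simp
  have t12: "t1 \<le> t2" using a12 unfolding t1_def t2_def by simp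
  have t2p: "0 < t2" using t1p t12 by simp
  define p1 where "p1 = g t1 / t1"
  define p2 where "p2 = g t2 / t2"
  have pp: "p2 \<le> p1" unfolding p1_def p2_def using slope_anti t1p t12 by blast
  have dd: "gd t2 \<le> gd t1" using gd_anti t1p t12 by simp
  have dp: "gd t2 \<le> p2" unfolding p2_def using gd_le_p t2p by simp
  have FD1: "FD b a1 = (b * p1 + a1 * gd t1) / t1"
    using t1p unfolding FD_def p1_def t1_def by simp
  have FD2: "FD b a2 = (b * p2 + a2 * gd t2) / t2"
    using t2p unfolding FD_def p2_def t2_def by simp
  have n1: "b * p2 + a1 * gd t2 \<le> b * p1 + a1 * gd t1"
    using pp dd a1 b by (intro add_mono mult_left_mono) auto
  have id: "(b * p2 + a1 * gd t2) * t2 - (b * p2 + a2 * gd t2) * t1 = b * (a2 - a1) * (p2 - gd t2)"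
    unfolding t1_def t2_def by (simp add: algebra_simps)
  have "0 \<le> b * (a2 - a1) * (p2 - gd t2)" using b a12 dp by simp
  then have "(b * p2 + a2 * gd t2) * t1 \<le> (b * p2 + a1 * gd t2) * t2" using id by linarith
  then have "(b * p2 + a2 * gd t2) / t2 \<le> (b * p2 + a1 * gd t2) / t1"
    using t1p t2p by (simp add: divide_simps)
  also have "\<dots> \<le> (b * p1 + a1 * gd t1) / t1"
    using n1 t1p by (simp add: divide_right_mono)
  finally show ?thesis using FD1 FD2 by simp
qed

lemma T1_eq:
  assumes A: "0 \<le> A" and B: "0 \<le> B" and s: "A + B \<le> sx" and sp: "0 < sx"
  shows "FD (sx - A) A * (B - A) + FD (sx - B) B * (A - B) = (A - B)^2 * (g sx / sx - gd sx) / sx"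
proof -
  have "FD (sx - A) A = ((sx - A) * (g sx / sx) + A * gd sx) / sx" using sp by (simp add: FD_def)
  moreover have "FD (sx - B) B = ((sx - B) * (g sx / sx) + B * gd sx) / sx" using sp by (simp add: FD_def)
  ultimately show ?thesis using aux3[of sx A "g sx / sx" "gd sx" B] sp by simp
qed

lemma T1_nonneg:
  assumes A: "0 \<le> A" and B: "0 \<le> B" and s: "A + B \<le> sx"
  shows "0 \<le> FD (sx - A) A * (B - A) + FD (sx - B) B * (A - B)"
proof (cases "sx = 0")
  case True
  then have "A = 0" "B = 0" using A B s by auto
  then show ?thesis by simp
next
  case False
  then have sp: "0 < sx" using A B s by simp
  have "gd sx \<le> g sx / sx" using gd_le_p sp by simp
  then show ?thesis using T1_eq[OF A B s sp] sp by simp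
qed

lemma T1_strict:
  assumes sc: "strictly_concave_on {0..} g"
    and A: "0 \<le> A" and B: "0 \<le> B" and s: "A + B \<le> sx"
    and z: "FD (sx - A) A * (B - A) + FD (sx - B) B * (A - B) = 0"
  shows "A = B"
proof (cases "sx = 0")
  case True
  then show ?thesis using A B s by auto
next
  case False
  then have sp: "0 < sx" using A B s by simp
  have "gd sx < g sx / sx" using gd_lt_slope[OF sc sp] sp by (simp add: less_divide_eq)
  then have "0 < (g sx / sx - gd sx) / sx" using sp by simp
  moreover have "(A - B)^2 * (g sx / sx - gd sx) / sx = 0" using T1_eq[OF A B s sp] z by simp
  ultimately have "(A - B)^2 = 0" by (metis divide_eq_0_iff mult_eq_0_iff times_divide_eq_right less_irrefl)
  then show ?thesis by simp
qed

lemma F_concave: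
  assumes "0 \<le> b"
  shows "concave_on {0..} (F b)"
  by (rule conc_from_deriv[OF F_deriv FD_anti]) (use assms in auto)

definition h :: "real \<Rightarrow> real \<Rightarrow> real" where
  "h N y = (1 - 1/N) * Q (N * y) + (1/N) * g (N * y)"

definition hD :: "real \<Rightarrow> real \<Rightarrow> real" where
  "hD N y = (N - 1) * q (N * y) + gd (N * y)"

lemma h_deriv:
  assumes N: "1 \<le> N" and y: "0 \<le> y"
  shows "(h N has_real_derivative hD N y) (at y within {0..})"
proof -
  have Ny: "0 \<le> N * y" using N y by simp
  have d1: "((\<lambda>y. Q (N * y + 0)) has_real_derivative q (N * y + 0) * N) (at y within {0..})"
    by (rule chain_aff) (use Q_deriv Ny N y in auto)
  have d2: "((\<lambda>y. g (N * y + 0)) has_real_derivative gd (N * y + 0) * N) (at y within {0..})"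
    by (rule chain_aff) (use der Ny N y in auto)
  have "(h N has_real_derivative (1 - 1/N) * (q (N * y) * N) + (1/N) * (gd (N * y) * N)) (at y within {0..})"
    unfolding h_def[abs_def] using d1 d2 by (auto intro!: derivative_eq_intros)
  moreover have "(1 - 1/N) * (q (N * y) * N) + (1/N) * (gd (N * y) * N) = hD N y"
    using N unfolding hD_def by (simp add: field_simps)
  ultimately show ?thesis by simp
qed

lemma hD_anti:
  assumes N: "1 \<le> N" and y1: "0 \<le> y1" and y12: "y1 \<le> y2"
  shows "hD N y2 \<le> hD N y1"
proof -
  have "q (N * y2) \<le> q (N * y1)" using q_anti N y1 y12 by (simp add: mult_left_mono)
  then have "(N - 1) * q (N * y2) \<le> (N - 1) * q (N * y1)" using N by (simp add: mult_left_mono)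
  moreover have "gd (N * y2) \<le> gd (N * y1)" using gd_anti N y1 y12 by (simp add: mult_left_mono)
  ultimately show ?thesis unfolding hD_def by simp
qed

lemma h_concave:
  assumes "1 \<le> N"
  shows "concave_on {0..} (h N)"
  by (rule conc_from_deriv[OF h_deriv hD_anti]) (use assms in auto)

lemma h_mid:
  assumes N: "1 \<le> N" and y1: "0 \<le> y1" and y2: "0 \<le> y2"
  shows "(1/2) * h N y1 + (1/2) * h N y2 \<le> h N ((1/2) * y1 + (1/2) * y2)"
  using concave_onD[OF h_concave[OF N], of "1/2" y1 y2] y1 y2 by simp

lemma h_strict_mid:
  assumes sc: "strictly_concave_on {0..} g" and N: "1 \<le> N" and y1: "0 \<le> y1" and y2: "0 \<le> y2"
    and ne: "y1 \<noteq> y2"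
  shows "(1/2) * h N y1 + (1/2) * h N y2 < h N ((1/2) * y1 + (1/2) * y2)"
proof -
  have e: "N * ((1/2) * y1 + (1/2) * y2) = (1 - 1/2) *\<^sub>R (N * y1) + (1/2::real) *\<^sub>R (N * y2)"
    by (simp add: algebra_simps)
  have Qm: "(1 - 1/2) * Q (N * y1) + (1/2) * Q (N * y2) \<le> Q ((1 - 1/2) *\<^sub>R (N * y1) + (1/2::real) *\<^sub>R (N * y2))"
    by (rule concave_onD[OF Q_concave]) (use N y1 y2 in auto)
  have ne': "N * y1 \<noteq> N * y2" using ne N by simp
  have "\<forall>t::real. 0 < t \<and> t < 1 \<longrightarrow> - g ((1 - t) *\<^sub>R (N * y1) + t *\<^sub>R (N * y2)) < (1 - t) * - g (N * y1) + t * - g (N * y2)"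
    using sc ne' N y1 y2 unfolding strictly_concave_on_def strictly_convex_on_def by simp
  then have um: "- g ((1 - 1/2) *\<^sub>R (N * y1) + (1/2::real) *\<^sub>R (N * y2)) < (1 - 1/2) * - g (N * y1) + (1/2) * - g (N * y2)"
    by (metis field_sum_of_halves half_gt_zero_iff zero_less_one add_diff_cancel_right' less_add_same_cancel2)
  define M where "M = (1 - 1/2) *\<^sub>R (N * y1) + (1/2::real) *\<^sub>R (N * y2)"
  have Qm': "(1/2) * Q (N * y1) + (1/2) * Q (N * y2) \<le> Q M" using Qm unfolding M_def by simp
  have um': "(1/2) * g (N * y1) + (1/2) * g (N * y2) < g M" using um unfolding M_def by simp
  have a: "(1 - 1/N) * ((1/2) * Q (N * y1) + (1/2) * Q (N * y2)) \<le> (1 - 1/N) * Q M"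
    using Qm' N by (intro mult_left_mono) auto
  have b: "(1/N) * ((1/2) * g (N * y1) + (1/2) * g (N * y2)) < (1/N) * g M"
    using um' N by (intro mult_strict_left_mono) auto
  have "(1/2) * h N y1 + (1/2) * h N y2 = (1 - 1/N) * ((1/2) * Q (N * y1) + (1/2) * Q (N * y2)) + (1/N) * ((1/2) * g (N * y1) + (1/2) * g (N * y2))"
    unfolding h_def using N by (simp add: field_simps)
  moreover have "h N ((1/2) * y1 + (1/2) * y2) = (1 - 1/N) * Q M + (1/N) * g M"
    unfolding h_def M_def e[symmetric] ..
  ultimately show ?thesis using a b by linarith
qed

lemma hD_FD:
  assumes N: "1 \<le> N" and y: "0 \<le> y"
  shows "hD N y = N * FD (N * y - y) y"
proof (cases "y = 0")
  case True
  then show ?thesis unfolding hD_def FD_def q_def by (simp add: algebra_simps)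
next
  case False
  then have yp: "0 < y" using y by simp
  then have Nyp: "0 < N * y" using N by simp
  have "FD (N * y - y) y = ((N * y - y) * (g (N * y) / (N * y)) + y * gd (N * y)) / (N * y)"
    unfolding FD_def using Nyp N yp by simp
  moreover have "hD N y = (N - 1) * (g (N * y) / (N * y)) + gd (N * y)"
    unfolding hD_def q_def using Nyp N yp by simp
  ultimately show ?thesis using aux2[of y N "g (N * y) / (N * y)" "gd (N * y)"] yp N by simp
qed

end



lemma simplex_nonneg: "v \<in> unit_simplex \<Longrightarrow> 0 \<le> v $ x"
  by (simp add: unit_simplex_def)

lemma simplex_sum: "v \<in> unit_simplex \<Longrightarrow> (\<Sum>x\<in>UNIV. v $ x) = 1"
  by (simp add: unit_simplex_def)

lemma simplex_le1: "v \<in> unit_simplex \<Longrightarrow> v $ x \<le> 1"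
proof -
  assume v: "v \<in> unit_simplex"
  have "v $ x \<le> (\<Sum>y\<in>UNIV. v $ y)"
    by (rule member_le_sum) (use v simplex_nonneg in auto)
  then show ?thesis using simplex_sum[OF v] by simp
qed

lemma simplex_seg:
  assumes v: "v \<in> unit_simplex" and w: "w \<in> unit_simplex" and t: "0 \<le> t" "t \<le> 1"
  shows "v + t *\<^sub>R (w - v) \<in> unit_simplex"
proof -
  have "0 \<le> v $ x + t * (w $ x - v $ x)" for x
  proof -
    have "v $ x + t * (w $ x - v $ x) = (1 - t) * v $ x + t * w $ x" by (simp add: algebra_simps)
    also have "\<dots> \<ge> 0" using t simplex_nonneg[OF v, of x] simplex_nonneg[OF w, of x] by simp
    finally show ?thesis by simp
  qed
  moreover have "(\<Sum>x\<in>UNIV. v $ x + t * (w $ x - v $ x)) = 1"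
    using simplex_sum[OF v] simplex_sum[OF w]
    by (simp add: sum.distrib sum_distrib_left[symmetric] sum_subtractf)
  ultimately show ?thesis by (simp add: unit_simplex_def)
qed

lemma simplex_convex: "convex (unit_simplex :: (real^'e::finite) set)"
  unfolding convex_alt
proof (intro ballI allI impI)
  fix v w :: "real^'e" and t :: real
  assume "v \<in> unit_simplex" "w \<in> unit_simplex" "0 \<le> t \<and> t \<le> 1"
  then have "v + t *\<^sub>R (w - v) \<in> unit_simplex" using simplex_seg by blast
  then show "(1 - t) *\<^sub>R v + t *\<^sub>R w \<in> unit_simplex" by (simp add: convex_seg)
qed

lemma simplex_compact: "compact (unit_simplex :: (real^'e::finite) set)"
unfolding compact_eq_bounded_closed
proof (intro conjI)
  show "bounded (unit_simplex :: (real^'e::finite) set)"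
    unfolding bounded_iff
  proof (intro exI ballI)
    fix v :: "real^'e" assume v: "v \<in> unit_simplex"
    have "norm v \<le> (\<Sum>x\<in>UNIV. \<bar>v $ x\<bar>)" by (rule norm_le_l1_cart)
    also have "\<dots> = (\<Sum>x\<in>UNIV. v $ x)" by (rule sum.cong) (auto simp: simplex_nonneg[OF v])
    also have "\<dots> = 1" by (rule simplex_sum[OF v])
    finally show "norm v \<le> 1" .
  qed
  have "unit_simplex = (\<Inter>x. {v::real^'e. 0 \<le> v $ x}) \<inter> {v. (\<Sum>x\<in>UNIV. v $ x) = 1}"
    by (auto simp: unit_simplex_def)
  moreover have "closed (\<Inter>x. {v::real^'e. 0 \<le> v $ x})"
    by (intro closed_INT ballI closed_Collect_le continuous_intros)
  moreover have "closed {v::real^'e. (\<Sum>x\<in>UNIV. v $ x) = 1}"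
    by (intro closed_Collect_eq continuous_intros)
  ultimately show "closed (unit_simplex :: (real^'e::finite) set)" by (metis closed_Int)
qed

lemma simplex_nonempty: "\<exists>v. v \<in> (unit_simplex :: (real^'e::finite) set)"
proof
  show "(\<chi> x. 1 / real CARD('e)) \<in> (unit_simplex :: (real^'e::finite) set)"
    by (simp add: unit_simplex_def)
qed

lemma path_sum_deriv:
  fixes k kD :: "'e::finite \<Rightarrow> real \<Rightarrow> real" and c :: "real^'e \<Rightarrow> real" and kD' :: "'e \<Rightarrow> real"
  assumes v: "v \<in> unit_simplex" and w: "w \<in> unit_simplex"
    and dk: "\<And>x. (k x has_real_derivative kD' x) (at (v $ x) within {0..})"
    and dc: "(c has_derivative D) (at v within unit_simplex)"
  shows "((\<lambda>t. (\<Sum>x\<in>UNIV. k x ((v + t *\<^sub>R (w - v)) $ x)) - \<alpha> * c (v + t *\<^sub>R (w - v)))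
     has_real_derivative ((\<Sum>x\<in>UNIV. kD' x * (w $ x - v $ x)) - \<alpha> * D (w - v))) (at 0 within {0..1})"
proof -
  have comp: "((\<lambda>t. k x (v $ x + t * (w $ x - v $ x))) has_real_derivative kD' x * (w $ x - v $ x)) (at 0 within {0..1})" for x
  proof -
    have im: "(\<lambda>t. v $ x + t * (w $ x - v $ x)) ` {0..1} \<subseteq> {0..}"
      using simplex_seg[OF v w] simplex_nonneg by fastforce
    have d': "(k x has_real_derivative kD' x) (at ((\<lambda>t. v $ x + t * (w $ x - v $ x)) 0) within ((\<lambda>t. v $ x + t * (w $ x - v $ x)) ` {0..1}))"
      using DERIV_subset[OF dk im] by simp
    have l: "((\<lambda>t. v $ x + t * (w $ x - v $ x)) has_real_derivative (w $ x - v $ x)) (at 0 within {0..1})"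
      by (auto intro!: derivative_eq_intros)
    show ?thesis using DERIV_image_chain[OF d' l] by (simp add: o_def)
  qed
  have s: "((\<lambda>t. \<Sum>x\<in>UNIV. k x (v $ x + t * (w $ x - v $ x))) has_real_derivative (\<Sum>x\<in>UNIV. kD' x * (w $ x - v $ x))) (at 0 within {0..1})"
    by (rule DERIV_sum) (use comp in auto)
  have cc: "((\<lambda>t. c (v + t *\<^sub>R (w - v))) has_real_derivative D (w - v)) (at 0 within {0..1})"
    by (rule path_deriv[OF dc]) (use simplex_seg[OF v w] in auto)
  have "((\<lambda>t. (\<Sum>x\<in>UNIV. k x (v $ x + t * (w $ x - v $ x))) - \<alpha> * c (v + t *\<^sub>R (w - v)))
     has_real_derivative ((\<Sum>x\<in>UNIV. kD' x * (w $ x - v $ x)) - \<alpha> * D (w - v))) (at 0 within {0..1})"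
    by (intro DERIV_diff DERIV_cmult s cc)
  then show ?thesis by simp
qed

lemma conc_sum:
  fixes k :: "'e::finite \<Rightarrow> real \<Rightarrow> real" and c :: "real^'e \<Rightarrow> real"
  assumes ck: "\<And>x. concave_on {0..} (k x)" and cc: "convex_on unit_simplex c" and al: "0 \<le> \<alpha>"
    and z1: "z1 \<in> unit_simplex" and z2: "z2 \<in> unit_simplex" and t: "0 \<le> t" "t \<le> 1"
  shows "(1 - t) * ((\<Sum>x\<in>UNIV. k x (z1 $ x)) - \<alpha> * c z1) + t * ((\<Sum>x\<in>UNIV. k x (z2 $ x)) - \<alpha> * c z2)
    \<le> (\<Sum>x\<in>UNIV. k x (((1 - t) *\<^sub>R z1 + t *\<^sub>R z2) $ x)) - \<alpha> * c ((1 - t) *\<^sub>R z1 + t *\<^sub>R z2)"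
proof -
  have "(1 - t) * k x (z1 $ x) + t * k x (z2 $ x) \<le> k x ((1 - t) *\<^sub>R (z1 $ x) + t *\<^sub>R (z2 $ x))" for x
    by (rule concave_onD[OF ck]) (use t z1 z2 simplex_nonneg in auto)
  then have s: "(\<Sum>x\<in>UNIV. (1 - t) * k x (z1 $ x) + t * k x (z2 $ x)) \<le> (\<Sum>x\<in>UNIV. k x (((1 - t) *\<^sub>R z1 + t *\<^sub>R z2) $ x))"
    by (intro sum_mono) simp
  have "c ((1 - t) *\<^sub>R z1 + t *\<^sub>R z2) \<le> (1 - t) * c z1 + t * c z2"
    by (rule convex_onD[OF cc]) (use t z1 z2 in auto)
  then have "\<alpha> * c ((1 - t) *\<^sub>R z1 + t *\<^sub>R z2) \<le> \<alpha> * ((1 - t) * c z1 + t * c z2)"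
    using al by (intro mult_left_mono)
  moreover have "(\<Sum>x\<in>UNIV. (1 - t) * k x (z1 $ x) + t * k x (z2 $ x)) = (1 - t) * (\<Sum>x\<in>UNIV. k x (z1 $ x)) + t * (\<Sum>x\<in>UNIV. k x (z2 $ x))"
    by (simp add: sum.distrib sum_distrib_left)
  moreover have "(1 - t) * ((\<Sum>x\<in>UNIV. k x (z1 $ x)) - \<alpha> * c z1) + t * ((\<Sum>x\<in>UNIV. k x (z2 $ x)) - \<alpha> * c z2)
     = ((1 - t) * (\<Sum>x\<in>UNIV. k x (z1 $ x)) + t * (\<Sum>x\<in>UNIV. k x (z2 $ x))) - \<alpha> * ((1 - t) * c z1 + t * c z2)"
    by (simp add: algebra_simps)
  ultimately show ?thesis using s by linarith
qed



lemma diff2: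
  fixes A B :: "real^'e::finite"
  assumes A: "A \<in> unit_simplex" and B: "B \<in> unit_simplex"
    and T: "card T \<le> 1" and eq: "\<And>x. x \<notin> T \<Longrightarrow> A $ x = B $ x"
  shows "A = B"
proof (rule ccontr)
  assume "A \<noteq> B"
  then obtain x1 where x1: "A $ x1 \<noteq> B $ x1" by (auto simp: vec_eq_iff)
  then have "x1 \<in> T" using eq by blast
  have fin: "finite T" by simp
  have oth: "A $ y = B $ y" if "y \<noteq> x1" for y
  proof -
    have "y \<notin> T" using \<open>x1 \<in> T\<close> that T card_le_Suc0_iff_eq[OF fin] by auto
    then show ?thesis using eq by blast
  qed
  have "(\<Sum>y\<in>UNIV. A $ y) = A $ x1 + (\<Sum>y\<in>UNIV - {x1}. A $ y)" by (simp add: sum.remove)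
  moreover have "(\<Sum>y\<in>UNIV. B $ y) = B $ x1 + (\<Sum>y\<in>UNIV - {x1}. B $ y)" by (simp add: sum.remove)
  moreover have "(\<Sum>y\<in>UNIV - {x1}. A $ y) = (\<Sum>y\<in>UNIV - {x1}. B $ y)"
    by (rule sum.cong) (auto simp: oth)
  ultimately have "A $ x1 = B $ x1" using simplex_sum[OF A] simplex_sum[OF B] by linarith
  with x1 show False by simp
qed

locale game =
  fixes u :: "'e::finite \<Rightarrow> real \<Rightarrow> real" and c :: "real^'e \<Rightarrow> real" and n :: nat
  assumes n_pos: "1 \<le> n" and u_zero: "\<And>x. u x 0 = 0"
    and u_concave: "\<And>x. concave_on {0..} (u x)"
    and u_diff: "\<And>x t. 0 \<le> t \<Longrightarrow> u x differentiable (at t within {0..})"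
    and c_convex: "convex_on unit_simplex c"
    and c_diff: "\<And>s. s \<in> unit_simplex \<Longrightarrow> c differentiable (at s within unit_simplex)"
    and strict: "card {x. \<not> strictly_concave_on {0..} (u x)} \<le> 1 \<or> strictly_convex_on unit_simplex c"
begin

definition ud :: "'e \<Rightarrow> real \<Rightarrow> real" where
  "ud x t = (SOME D. (u x has_real_derivative D) (at t within {0..}))"

lemma ud: "0 \<le> t \<Longrightarrow> (u x has_real_derivative ud x t) (at t within {0..})"
  unfolding ud_def using u_diff[of t x] real_differentiable_def by (metis someI_ex)

lemma cf: "cfun (u x) (ud x)"
  by unfold_locales (use u_zero u_concave ud in auto)

definition cD :: "real^'e \<Rightarrow> real^'e \<Rightarrow> real" where
  "cD v = (SOME D. (c has_derivative D) (at v within unit_simplex))"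

lemma cD: "v \<in> unit_simplex \<Longrightarrow> (c has_derivative cD v) (at v within unit_simplex)"
  unfolding cD_def using c_diff[of v] differentiable_def by (metis someI_ex)

lemma Npos: "0 < real n" using n_pos by simp

lemma aggregate_upd:
  assumes i: "i \<in> {1..n}"
  shows "aggregate n (S(i := w)) = aggregate n S - S i + w"
proof -
  have "aggregate n (S(i := w)) = w + (\<Sum>k\<in>{1..n} - {i}. (S(i := w)) k)"
    unfolding aggregate_def using i by (simp add: sum.remove)
  also have "(\<Sum>k\<in>{1..n} - {i}. (S(i := w)) k) = (\<Sum>k\<in>{1..n} - {i}. S k)"
    by (rule sum.cong) auto
  also have "aggregate n S = S i + (\<Sum>k\<in>{1..n} - {i}. S k)"
    unfolding aggregate_def using i by (simp add: sum.remove)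
  ultimately show ?thesis by (simp only: fun_upd_def) (simp add: algebra_simps)
qed

lemma payoff_dev:
  assumes i: "i \<in> {1..n}"
  shows "payoff u c n (S(i := w)) i = (\<Sum>x\<in>UNIV. cfun.F (u x) ((aggregate n S - S i) $ x) (w $ x)) - c w"
  unfolding payoff_def aggregate_upd[OF i] price_def cfun.F_def[OF cf]
  by (simp add: algebra_simps)

lemma payoff_self: "payoff u c n S i = payoff u c n (S(i := S i)) i"
  by simp

lemma agg_comp: "aggregate n S $ x = (\<Sum>k\<in>{1..n}. S k $ x)"
  unfolding aggregate_def by (simp add: sum_component)

lemma agg_ge1:
  assumes S: "\<And>k. k \<in> {1..n} \<Longrightarrow> S k \<in> unit_simplex" and i: "i \<in> {1..n}"
  shows "S i $ x \<le> aggregate n S $ x"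
  unfolding agg_comp by (rule member_le_sum) (use S i simplex_nonneg in auto)

lemma agg_ge2:
  assumes S: "\<And>k. k \<in> {1..n} \<Longrightarrow> S k \<in> unit_simplex" and i: "i \<in> {1..n}" and j: "j \<in> {1..n}" and ij: "i \<noteq> j"
  shows "S i $ x + S j $ x \<le> aggregate n S $ x"
proof -
  have "(\<Sum>k\<in>{i, j}. S k $ x) \<le> (\<Sum>k\<in>{1..n}. S k $ x)"
    by (rule sum_mono2) (use S i j simplex_nonneg in auto)
  then show ?thesis using ij unfolding agg_comp by simp
qed


lemma NE_dev:
  assumes NE: "is_pure_NE u c n S" and i: "i \<in> {1..n}" and w: "w \<in> unit_simplex"
  shows "(\<Sum>x\<in>UNIV. cfun.F (u x) ((aggregate n S - S i) $ x) (w $ x)) - c w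
       \<le> (\<Sum>x\<in>UNIV. cfun.F (u x) ((aggregate n S - S i) $ x) (S i $ x)) - c (S i)"
proof -
  have "payoff u c n (S(i := w)) i \<le> payoff u c n S i"
    using NE i w unfolding is_pure_NE_def by blast
  then show ?thesis
    unfolding payoff_dev[OF i] payoff_self[of S i] by simp
qed

lemma foc:
  assumes NE: "is_pure_NE u c n S" and i: "i \<in> {1..n}" and B: "B \<in> unit_simplex"
  shows "(\<Sum>x\<in>UNIV. cfun.FD (u x) (ud x) ((aggregate n S - S i) $ x) (S i $ x) * (B $ x - S i $ x))
     - cD (S i) (B - S i) \<le> 0"
proof -
  define A where "A = S i"
  have Sall: "\<And>k. k \<in> {1..n} \<Longrightarrow> S k \<in> unit_simplex" using NE unfolding is_pure_NE_def by blast
  have A: "A \<in> unit_simplex" using Sall i unfolding A_def by blast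
  define b where "b x = (aggregate n S - A) $ x" for x
  have b: "0 \<le> b x" for x using agg_ge1[OF Sall i, where x=x] unfolding b_def A_def by simp
  have dk: "\<And>x. (cfun.F (u x) (b x) has_real_derivative cfun.FD (u x) (ud x) (b x) (A $ x)) (at (A $ x) within {0..})"
    using cfun.F_deriv[OF cf] simplex_nonneg[OF A] b by blast
  have d: "((\<lambda>t. (\<Sum>x\<in>UNIV. cfun.F (u x) (b x) ((A + t *\<^sub>R (B - A)) $ x)) - 1 * c (A + t *\<^sub>R (B - A)))
     has_real_derivative ((\<Sum>x\<in>UNIV. cfun.FD (u x) (ud x) (b x) (A $ x) * (B $ x - A $ x)) - 1 * cD A (B - A))) (at 0 within {0..1})"
    by (rule path_sum_deriv[OF A B dk cD[OF A]])
  have "(\<Sum>x\<in>UNIV. cfun.FD (u x) (ud x) (b x) (A $ x) * (B $ x - A $ x)) - 1 * cD A (B - A) \<le> 0"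
  proof (rule dir_lemma[OF d])
    fix t :: real assume t: "0 < t" "t \<le> 1"
    have "A + t *\<^sub>R (B - A) \<in> unit_simplex" using simplex_seg[OF A B] t by simp
    from NE_dev[OF NE i this] show "(\<Sum>x\<in>UNIV. cfun.F (u x) (b x) ((A + t *\<^sub>R (B - A)) $ x)) - 1 * c (A + t *\<^sub>R (B - A)) -
         ((\<Sum>x\<in>UNIV. cfun.F (u x) (b x) ((A + 0 *\<^sub>R (B - A)) $ x)) - 1 * c (A + 0 *\<^sub>R (B - A))) \<le> t * 0"
      unfolding b_def A_def by simp
  qed
  then show ?thesis unfolding b_def A_def by simp
qed

lemma NE_sym:
  assumes NE: "is_pure_NE u c n S" and i: "i \<in> {1..n}" and j: "j \<in> {1..n}"
  shows "S i = S j"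
proof (rule ccontr)
  assume ne: "S i \<noteq> S j"
  then have ij: "i \<noteq> j" by auto
  define A where "A = S i"
  define B where "B = S j"
  define s where "s = aggregate n S"
  have Sall: "\<And>k. k \<in> {1..n} \<Longrightarrow> S k \<in> unit_simplex" using NE unfolding is_pure_NE_def by blast
  have A: "A \<in> unit_simplex" and B: "B \<in> unit_simplex" using Sall i j unfolding A_def B_def by auto
  have AB: "A $ x + B $ x \<le> s $ x" for x using agg_ge2[OF Sall i j ij, where x=x] unfolding A_def B_def s_def by simp
  define T1 where "T1 x = cfun.FD (u x) (ud x) (s $ x - A $ x) (A $ x) * (B $ x - A $ x)
      + cfun.FD (u x) (ud x) (s $ x - B $ x) (B $ x) * (A $ x - B $ x)" for x
  have T1nn: "0 \<le> T1 x" for x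
    unfolding T1_def by (rule cfun.T1_nonneg[OF cf]) (use simplex_nonneg[OF A] simplex_nonneg[OF B] AB in auto)
  have Ei: "(\<Sum>x\<in>UNIV. cfun.FD (u x) (ud x) (s $ x - A $ x) (A $ x) * (B $ x - A $ x)) - cD A (B - A) \<le> 0"
    using foc[OF NE i B] unfolding A_def s_def by simp
  have Ej: "(\<Sum>x\<in>UNIV. cfun.FD (u x) (ud x) (s $ x - B $ x) (B $ x) * (A $ x - B $ x)) - cD B (A - B) \<le> 0"
    using foc[OF NE j A] unfolding B_def s_def by simp
  have sumT: "(\<Sum>x\<in>UNIV. T1 x) \<le> cD A (B - A) + cD B (A - B)"
    using Ei Ej unfolding T1_def by (simp add: sum.distrib)
  have tA: "cD A (B - A) \<le> c B - c A" by (rule tang[OF c_convex A B cD[OF A]])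
  have tB: "cD B (A - B) \<le> c A - c B" by (rule tang[OF c_convex B A cD[OF B]])
  have ABne: "A \<noteq> B" using ne unfolding A_def B_def .
  show False
    using strict
  proof
    assume sc: "strictly_convex_on unit_simplex c"
    have "cD A (B - A) < c B - c A" by (rule tang_strict[OF sc A B ABne cD[OF A]])
    moreover have "0 \<le> (\<Sum>x\<in>UNIV. T1 x)" by (rule sum_nonneg) (use T1nn in auto)
    ultimately show False using sumT tB by linarith
  next
    assume card: "card {x. \<not> strictly_concave_on {0..} (u x)} \<le> 1"
    have "(\<Sum>x\<in>UNIV. T1 x) \<le> 0" using sumT tA tB by linarith
    then have "(\<Sum>x\<in>UNIV. T1 x) = 0" using sum_nonneg[of UNIV T1] T1nn by force
    then have z: "T1 x = 0" for x using sum_nonneg_eq_0_iff[of UNIV T1] T1nn by auto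
    have "A = B"
    proof (rule diff2[OF A B card])
      fix x assume "x \<notin> {x. \<not> strictly_concave_on {0..} (u x)}"
      then have sc: "strictly_concave_on {0..} (u x)" by simp
      show "A $ x = B $ x"
        by (rule cfun.T1_strict[OF cf sc]) (use simplex_nonneg[OF A] simplex_nonneg[OF B] AB z[of x] in \<open>auto simp: T1_def\<close>)
    qed
    with ABne show False by simp
  qed
qed


definition psi :: "real^'e \<Rightarrow> real" where
  "psi z = (\<Sum>x\<in>UNIV. cfun.h (u x) (real n) (z $ x)) - real n * c z"

definition gv :: "real^'e \<Rightarrow> real^'e \<Rightarrow> real" where
  "gv v w = (\<Sum>x\<in>UNIV. cfun.F (u x) (real n * v $ x - v $ x) (w $ x)) - c w"

lemma b_nonneg: "v \<in> unit_simplex \<Longrightarrow> 0 \<le> real n * v $ x - v $ x"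
proof -
  assume v: "v \<in> unit_simplex"
  have "real n * v $ x - v $ x = (real n - 1) * v $ x" by (simp add: algebra_simps)
  then show ?thesis using n_pos simplex_nonneg[OF v, of x] by simp
qed

lemma zero_deriv:
  assumes v: "v \<in> unit_simplex" and w: "w \<in> unit_simplex"
  shows "((\<lambda>t. psi (v + t *\<^sub>R (w - v)) - real n * gv v (v + t *\<^sub>R (w - v))) has_real_derivative 0) (at 0 within {0..1})"
proof -
  have N1: "1 \<le> real n" using n_pos by simp
  have dh: "\<And>x. (cfun.h (u x) (real n) has_real_derivative cfun.hD (u x) (ud x) (real n) (v $ x)) (at (v $ x) within {0..})"
    using cfun.h_deriv[OF cf N1] simplex_nonneg[OF v] by blast
  have dF: "\<And>x. (cfun.F (u x) (real n * v $ x - v $ x) has_real_derivative cfun.FD (u x) (ud x) (real n * v $ x - v $ x) (v $ x)) (at (v $ x) within {0..})"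
    using cfun.F_deriv[OF cf] simplex_nonneg[OF v] b_nonneg[OF v] by blast
  have P: "((\<lambda>t. (\<Sum>x\<in>UNIV. cfun.h (u x) (real n) ((v + t *\<^sub>R (w - v)) $ x)) - real n * c (v + t *\<^sub>R (w - v)))
     has_real_derivative ((\<Sum>x\<in>UNIV. cfun.hD (u x) (ud x) (real n) (v $ x) * (w $ x - v $ x)) - real n * cD v (w - v))) (at 0 within {0..1})"
    by (rule path_sum_deriv[OF v w dh cD[OF v]])
  have G: "((\<lambda>t. (\<Sum>x\<in>UNIV. cfun.F (u x) (real n * v $ x - v $ x) ((v + t *\<^sub>R (w - v)) $ x)) - 1 * c (v + t *\<^sub>R (w - v)))
     has_real_derivative ((\<Sum>x\<in>UNIV. cfun.FD (u x) (ud x) (real n * v $ x - v $ x) (v $ x) * (w $ x - v $ x)) - 1 * cD v (w - v))) (at 0 within {0..1})"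
    by (rule path_sum_deriv[OF v w dF cD[OF v]])
  have D: "((\<lambda>t. ((\<Sum>x\<in>UNIV. cfun.h (u x) (real n) ((v + t *\<^sub>R (w - v)) $ x)) - real n * c (v + t *\<^sub>R (w - v)))
       - real n * ((\<Sum>x\<in>UNIV. cfun.F (u x) (real n * v $ x - v $ x) ((v + t *\<^sub>R (w - v)) $ x)) - 1 * c (v + t *\<^sub>R (w - v))))
     has_real_derivative (((\<Sum>x\<in>UNIV. cfun.hD (u x) (ud x) (real n) (v $ x) * (w $ x - v $ x)) - real n * cD v (w - v))
       - real n * ((\<Sum>x\<in>UNIV. cfun.FD (u x) (ud x) (real n * v $ x - v $ x) (v $ x) * (w $ x - v $ x)) - 1 * cD v (w - v)))) (at 0 within {0..1})"
    by (rule DERIV_diff[OF P DERIV_cmult[OF G]])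
  have "(\<Sum>x\<in>UNIV. cfun.hD (u x) (ud x) (real n) (v $ x) * (w $ x - v $ x))
      = real n * (\<Sum>x\<in>UNIV. cfun.FD (u x) (ud x) (real n * v $ x - v $ x) (v $ x) * (w $ x - v $ x))"
    unfolding sum_distrib_left
    by (rule sum.cong) (use cfun.hD_FD[OF cf N1] simplex_nonneg[OF v] in auto)
  then have "(((\<Sum>x\<in>UNIV. cfun.hD (u x) (ud x) (real n) (v $ x) * (w $ x - v $ x)) - real n * cD v (w - v))
       - real n * ((\<Sum>x\<in>UNIV. cfun.FD (u x) (ud x) (real n * v $ x - v $ x) (v $ x) * (w $ x - v $ x)) - 1 * cD v (w - v))) = 0"
    by (simp add: algebra_simps)
  with D show ?thesis unfolding psi_def gv_def by simp
qed

lemma gv_conc: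
  assumes v: "v \<in> unit_simplex" and z1: "z1 \<in> unit_simplex" and z2: "z2 \<in> unit_simplex" and t: "0 \<le> t" "t \<le> 1"
  shows "(1 - t) * gv v z1 + t * gv v z2 \<le> gv v ((1 - t) *\<^sub>R z1 + t *\<^sub>R z2)"
proof -
  have "(1 - t) * ((\<Sum>x\<in>UNIV. cfun.F (u x) (real n * v $ x - v $ x) (z1 $ x)) - 1 * c z1)
      + t * ((\<Sum>x\<in>UNIV. cfun.F (u x) (real n * v $ x - v $ x) (z2 $ x)) - 1 * c z2)
    \<le> (\<Sum>x\<in>UNIV. cfun.F (u x) (real n * v $ x - v $ x) (((1 - t) *\<^sub>R z1 + t *\<^sub>R z2) $ x)) - 1 * c ((1 - t) *\<^sub>R z1 + t *\<^sub>R z2)"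
    by (rule conc_sum[OF _ c_convex _ z1 z2 t]) (use cfun.F_concave[OF cf] b_nonneg[OF v] in auto)
  then show ?thesis unfolding gv_def by simp
qed

lemma psi_conc:
  assumes z1: "z1 \<in> unit_simplex" and z2: "z2 \<in> unit_simplex" and t: "0 \<le> t" "t \<le> 1"
  shows "(1 - t) * psi z1 + t * psi z2 \<le> psi ((1 - t) *\<^sub>R z1 + t *\<^sub>R z2)"
  unfolding psi_def
  by (rule conc_sum[OF _ c_convex _ z1 z2 t]) (use cfun.h_concave[OF cf] n_pos in auto)

lemma max_imp_dev:
  assumes v: "v \<in> unit_simplex" and mx: "\<And>z. z \<in> unit_simplex \<Longrightarrow> psi z \<le> psi v"
    and w: "w \<in> unit_simplex"
  shows "gv v w \<le> gv v v"
proof (rule ccontr)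
  assume "\<not> gv v w \<le> gv v v"
  then have dpos: "0 < gv v w - gv v v" by simp
  have "0 \<le> - real n * (gv v w - gv v v)"
  proof (rule dir_lemma[OF zero_deriv[OF v w]])
    fix t :: real assume t: "0 < t" "t \<le> 1"
    have zt: "v + t *\<^sub>R (w - v) \<in> unit_simplex" using simplex_seg[OF v w] t by simp
    define G where "G = gv v (v + t *\<^sub>R (w - v))"
    define P where "P = psi (v + t *\<^sub>R (w - v))"
    have p: "P \<le> psi v" using mx[OF zt] unfolding P_def .
    have "(1 - t) * gv v v + t * gv v w \<le> G"
      using gv_conc[OF v v w, of t] t unfolding G_def by (simp add: convex_seg)
    then have "t * (gv v w - gv v v) \<le> G - gv v v" by (simp add: algebra_simps)
    then have m: "real n * (t * (gv v w - gv v v)) \<le> real n * (G - gv v v)"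
      using Npos by (intro mult_left_mono) auto
    have e: "P - real n * G - (psi v - real n * gv v v) = (P - psi v) - real n * (G - gv v v)"
      by (simp add: algebra_simps)
    have e2: "t * (- real n * (gv v w - gv v v)) = - (real n * (t * (gv v w - gv v v)))" by simp
    show "psi (v + t *\<^sub>R (w - v)) - real n * gv v (v + t *\<^sub>R (w - v)) -
         (psi (v + 0 *\<^sub>R (w - v)) - real n * gv v (v + 0 *\<^sub>R (w - v))) \<le> t * (- real n * (gv v w - gv v v))"
      unfolding P_def[symmetric] G_def[symmetric] e2 using e p m by simp
  qed
  moreover have "0 < real n * (gv v w - gv v v)" using dpos Npos by simp
  ultimately show False by linarith
qed

lemma dev_imp_max:
  assumes v: "v \<in> unit_simplex" and dv: "\<And>w. w \<in> unit_simplex \<Longrightarrow> gv v w \<le> gv v v"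
    and z: "z \<in> unit_simplex"
  shows "psi z \<le> psi v"
proof (rule ccontr)
  assume "\<not> psi z \<le> psi v"
  then have dpos: "0 < psi z - psi v" by simp
  have d: "((\<lambda>t. - (psi (v + t *\<^sub>R (z - v)) - real n * gv v (v + t *\<^sub>R (z - v)))) has_real_derivative - 0) (at 0 within {0..1})"
    by (rule DERIV_minus[OF zero_deriv[OF v z]])
  have "- 0 \<le> - (psi z - psi v)"
  proof (rule dir_lemma[OF d])
    fix t :: real assume t: "0 < t" "t \<le> 1"
    have zt: "v + t *\<^sub>R (z - v) \<in> unit_simplex" using simplex_seg[OF v z] t by simp
    define G where "G = gv v (v + t *\<^sub>R (z - v))"
    define P where "P = psi (v + t *\<^sub>R (z - v))"
    have g: "G \<le> gv v v" using dv[OF zt] unfolding G_def .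
    then have m: "real n * G \<le> real n * gv v v" using Npos by (intro mult_left_mono) auto
    have "(1 - t) * psi v + t * psi z \<le> P"
      using psi_conc[OF v z, of t] t unfolding P_def by (simp add: convex_seg)
    then have p: "t * (psi z - psi v) \<le> P - psi v" by (simp add: algebra_simps)
    show "- (psi (v + t *\<^sub>R (z - v)) - real n * gv v (v + t *\<^sub>R (z - v))) -
        - (psi (v + 0 *\<^sub>R (z - v)) - real n * gv v (v + 0 *\<^sub>R (z - v))) \<le> t * - (psi z - psi v)"
    proof -
      have e1: "t * - (psi z - psi v) = - (t * (psi z - psi v))" by (simp only: mult_minus_right)
      have e0: "v + 0 *\<^sub>R (z - v) = v" by simp
      show ?thesis unfolding P_def[symmetric] G_def[symmetric] e0 e1 using p m by linarith
    qed
  qed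
  then show False using dpos by simp
qed


lemma c_cont: "continuous_on unit_simplex c"
  unfolding continuous_on_eq_continuous_within
  using c_diff differentiable_imp_continuous_within by blast

lemma psi_cont: "continuous_on unit_simplex psi"
proof -
  have N1: "1 \<le> real n" using n_pos by simp
  have hc: "continuous_on {0..} (cfun.h (u x) (real n))" for x
    by (rule cont_from_deriv[OF cfun.h_deriv[OF cf N1]])
  have hx: "continuous_on unit_simplex (\<lambda>z. cfun.h (u x) (real n) (z $ x))" for x
    by (rule continuous_on_compose2[OF hc[of x]]) (auto intro!: continuous_intros simp: simplex_nonneg)
  have s: "continuous_on unit_simplex (\<lambda>z. \<Sum>x\<in>UNIV. cfun.h (u x) (real n) (z $ x))"
    by (intro continuous_on_sum hx)
  show ?thesis unfolding psi_def[abs_def]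
    by (intro continuous_on_diff s continuous_on_mult[OF continuous_on_const c_cont])
qed

lemma exists_max: "\<exists>v\<in>unit_simplex. \<forall>z\<in>unit_simplex. psi z \<le> psi v"
  using continuous_attains_sup[OF simplex_compact _ psi_cont] simplex_nonempty by blast

lemma psi_strict_mid:
  assumes v1: "v1 \<in> unit_simplex" and v2: "v2 \<in> unit_simplex" and ne: "v1 \<noteq> v2"
  shows "(1/2) * psi v1 + (1/2) * psi v2 < psi ((1 - 1/2) *\<^sub>R v1 + (1/2::real) *\<^sub>R v2)"
proof -
  have N1: "1 \<le> real n" using n_pos by simp
  define m where "m = (1 - 1/2) *\<^sub>R v1 + (1/2::real) *\<^sub>R v2"
  have mS: "m \<in> unit_simplex" unfolding m_def using simplex_convex v1 v2
    by (rule convex_alt[THEN iffD1, rule_format]) auto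
  have mx: "m $ x = (1/2) * v1 $ x + (1/2) * v2 $ x" for x unfolding m_def by simp
  have hle: "(1/2) * cfun.h (u x) (real n) (v1 $ x) + (1/2) * cfun.h (u x) (real n) (v2 $ x) \<le> cfun.h (u x) (real n) (m $ x)" for x
    unfolding mx by (rule cfun.h_mid[OF cf N1]) (use simplex_nonneg v1 v2 in auto)
  have cle: "c m \<le> (1 - 1/2) * c v1 + (1/2) * c v2"
    unfolding m_def by (rule convex_onD[OF c_convex]) (use v1 v2 in auto)
  have hsum: "(\<Sum>x\<in>UNIV. (1/2) * cfun.h (u x) (real n) (v1 $ x) + (1/2) * cfun.h (u x) (real n) (v2 $ x))
      = (1/2) * (\<Sum>x\<in>UNIV. cfun.h (u x) (real n) (v1 $ x)) + (1/2) * (\<Sum>x\<in>UNIV. cfun.h (u x) (real n) (v2 $ x))"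
    by (simp add: sum.distrib sum_distrib_left)
  have expand: "(1/2) * psi v1 + (1/2) * psi v2 = (\<Sum>x\<in>UNIV. (1/2) * cfun.h (u x) (real n) (v1 $ x) + (1/2) * cfun.h (u x) (real n) (v2 $ x))
      - real n * ((1 - 1/2) * c v1 + (1/2) * c v2)"
    unfolding hsum psi_def by (simp add: algebra_simps)
  have pm: "psi m = (\<Sum>x\<in>UNIV. cfun.h (u x) (real n) (m $ x)) - real n * c m" unfolding psi_def ..
  have "(1/2) * psi v1 + (1/2) * psi v2 < psi m"
    using strict
  proof
    assume sc: "strictly_convex_on unit_simplex c"
    have "\<forall>t::real. 0 < t \<and> t < 1 \<longrightarrow> c ((1 - t) *\<^sub>R v1 + t *\<^sub>R v2) < (1 - t) * c v1 + t * c v2"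
      using sc v1 v2 ne unfolding strictly_convex_on_def by blast
    then have "c m < (1 - 1/2) * c v1 + (1/2) * c v2" unfolding m_def
      by (metis field_sum_of_halves half_gt_zero_iff zero_less_one add_diff_cancel_right' less_add_same_cancel2)
    then have "real n * c m < real n * ((1 - 1/2) * c v1 + (1/2) * c v2)" using Npos by simp
    moreover have "(\<Sum>x\<in>UNIV. (1/2) * cfun.h (u x) (real n) (v1 $ x) + (1/2) * cfun.h (u x) (real n) (v2 $ x))
        \<le> (\<Sum>x\<in>UNIV. cfun.h (u x) (real n) (m $ x))"
      by (rule sum_mono) (rule hle)
    ultimately show ?thesis unfolding expand pm by linarith
  next
    assume card: "card {x. \<not> strictly_concave_on {0..} (u x)} \<le> 1"
    obtain x0 where x0: "strictly_concave_on {0..} (u x0)" "v1 $ x0 \<noteq> v2 $ x0"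
      using diff2[OF v1 v2 card] ne by blast
    have "real n * c m \<le> real n * ((1 - 1/2) * c v1 + (1/2) * c v2)" using cle Npos by simp
    moreover have "(\<Sum>x\<in>UNIV. (1/2) * cfun.h (u x) (real n) (v1 $ x) + (1/2) * cfun.h (u x) (real n) (v2 $ x))
        < (\<Sum>x\<in>UNIV. cfun.h (u x) (real n) (m $ x))"
    proof (rule sum_strict_mono_ex1)
      show "\<forall>x\<in>UNIV. (1/2) * cfun.h (u x) (real n) (v1 $ x) + (1/2) * cfun.h (u x) (real n) (v2 $ x) \<le> cfun.h (u x) (real n) (m $ x)"
        using hle by blast
      show "\<exists>x\<in>UNIV. (1/2) * cfun.h (u x) (real n) (v1 $ x) + (1/2) * cfun.h (u x) (real n) (v2 $ x) < cfun.h (u x) (real n) (m $ x)"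
        using cfun.h_strict_mid[OF cf x0(1) N1 simplex_nonneg[OF v1] simplex_nonneg[OF v2] x0(2)] mx by auto
    qed simp
    ultimately show ?thesis unfolding expand pm by linarith
  qed
  then show ?thesis unfolding m_def .
qed

lemma umax:
  assumes v1: "v1 \<in> unit_simplex" and v2: "v2 \<in> unit_simplex"
    and m1: "\<And>z. z \<in> unit_simplex \<Longrightarrow> psi z \<le> psi v1"
    and m2: "\<And>z. z \<in> unit_simplex \<Longrightarrow> psi z \<le> psi v2"
  shows "v1 = v2"
proof (rule ccontr)
  assume ne: "v1 \<noteq> v2"
  define m where "m = (1 - 1/2) *\<^sub>R v1 + (1/2::real) *\<^sub>R v2"
  have mS: "m \<in> unit_simplex" unfolding m_def using simplex_convex v1 v2
    by (rule convex_alt[THEN iffD1, rule_format]) auto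
  have "(1/2) * psi v1 + (1/2) * psi v2 < psi m" using psi_strict_mid[OF v1 v2 ne] unfolding m_def .
  moreover have "psi m \<le> psi v1" "psi v2 \<le> psi v1" "psi v1 \<le> psi v2" using m1[OF mS] m1[OF v2] m2[OF v1] by auto
  ultimately show False by linarith
qed

lemma agg_sym:
  assumes "\<And>k. k \<in> {1..n} \<Longrightarrow> S k = v"
  shows "aggregate n S = real n *\<^sub>R v"
proof -
  have "aggregate n S = (\<Sum>k\<in>{1..n}. v)" unfolding aggregate_def by (rule sum.cong) (use assms in auto)
  then show ?thesis by (simp only: sum_constant_scaleR) simp
qed

lemma sym_payoff:
  assumes S: "\<And>k. k \<in> {1..n} \<Longrightarrow> S k = v" and i: "i \<in> {1..n}"
  shows "payoff u c n (S(i := w)) i = gv v w"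
  using agg_sym[OF S] S[OF i] by (simp add: payoff_dev[OF i] gv_def)

lemma sym_NE_iff:
  assumes S: "\<And>k. k \<in> {1..n} \<Longrightarrow> S k = v" and v: "v \<in> unit_simplex"
  shows "is_pure_NE u c n S \<longleftrightarrow> (\<forall>w\<in>unit_simplex. gv v w \<le> gv v v)"
proof -
  have self: "payoff u c n S i = gv v v" if "i \<in> {1..n}" for i
  proof -
    have "payoff u c n (S(i := S i)) i = gv v (S i)" by (rule sym_payoff) (use S that in auto)
    moreover have "S(i := S i) = S" by simp
    ultimately show ?thesis using S[OF that] by metis
  qed
  have dev: "payoff u c n (S(i := w)) i = gv v w" if "i \<in> {1..n}" for i w
    by (rule sym_payoff) (use S that in auto)
  have one: "1 \<in> {1..n}" using n_pos by simp
  show ?thesis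
  proof
    assume "is_pure_NE u c n S"
    then have "\<forall>t\<in>unit_simplex. payoff u c n (S(1 := t)) 1 \<le> payoff u c n S 1"
      unfolding is_pure_NE_def using one by blast
    then show "\<forall>w\<in>unit_simplex. gv v w \<le> gv v v" using self[OF one] dev[OF one] by simp
  next
    assume a: "\<forall>w\<in>unit_simplex. gv v w \<le> gv v v"
    show "is_pure_NE u c n S"
      unfolding is_pure_NE_def using a self dev S v by simp
  qed
qed

lemma potential_psi: "potential u c n s = psi ((1 / real n) *\<^sub>R s)"
  unfolding potential_def psi_def cfun.h_def[OF cf] cfun.Q_def[OF cf] using Npos by simp

end


lemma scaled_to_simplex:
  assumes s: "s \<in> scaled_simplex n" and n: "1 \<le> n"
  shows "(1 / real n) *\<^sub>R s \<in> (unit_simplex :: (real^'e::finite) set)"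
proof -
  have "(\<Sum>x\<in>UNIV. s $ x / real n) = (\<Sum>x\<in>UNIV. s $ x) / real n" by (simp add: sum_divide_distrib)
  then show ?thesis using s n unfolding scaled_simplex_def unit_simplex_def by simp
qed

theorem theorem1:
  fixes u :: "'e::finite \<Rightarrow> real \<Rightarrow> real"
    and c :: "real^'e \<Rightarrow> real"
    and n :: nat
  assumes n_pos: "1 \<le> n"
    and u_nonneg: "\<And>x t. 0 \<le> t \<Longrightarrow> 0 \<le> u x t"
    and u_zero: "\<And>x. u x 0 = 0"
    and u_concave: "\<And>x. concave_on {0..} (u x)"
    and u_diff: "\<And>x t. 0 \<le> t \<Longrightarrow> u x differentiable (at t within {0..})"
    and c_nonneg: "\<And>s. s \<in> unit_simplex \<Longrightarrow> 0 \<le> c s"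
    and c_convex: "convex_on unit_simplex c"
    and c_diff: "\<And>s. s \<in> unit_simplex \<Longrightarrow> c differentiable (at s within unit_simplex)"
    and strict: "card {x. \<not> strictly_concave_on {0..} (u x)} \<le> 1
                 \<or> strictly_convex_on unit_simplex c"
  shows "\<exists>S. is_pure_NE u c n S
           \<and> (\<forall>T. is_pure_NE u c n T \<longrightarrow> (\<forall>i\<in>{1..n}. T i = S i))
           \<and> (\<forall>i\<in>{1..n}. S i = (1 / real n) *\<^sub>R aggregate n S)
           \<and> aggregate n S \<in> scaled_simplex n
           \<and> (\<forall>s\<in>scaled_simplex n. potential u c n s \<le> potential u c n (aggregate n S))
           \<and> (\<forall>s\<in>scaled_simplex n.
                 potential u c n s = potential u c n (aggregate n S) \<longrightarrow> s = aggregate n S)"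
proof -
  interpret G: game u c n
    by unfold_locales (use n_pos u_zero u_concave u_diff c_convex c_diff strict in auto)
  obtain v where v: "v \<in> unit_simplex" and mx: "\<And>z. z \<in> unit_simplex \<Longrightarrow> G.psi z \<le> G.psi v"
    using G.exists_max by blast
  define S where "S = (\<lambda>k::nat. v)"
  have Sv: "\<And>k. k \<in> {1..n} \<Longrightarrow> S k = v" unfolding S_def by simp
  have devv: "G.gv v w \<le> G.gv v v" if "w \<in> unit_simplex" for w
    by (rule G.max_imp_dev) (use v mx that in auto)
  have iff: "is_pure_NE u c n S \<longleftrightarrow> (\<forall>w\<in>unit_simplex. G.gv v w \<le> G.gv v v)"
    by (rule G.sym_NE_iff[where S=S and v=v, OF Sv v])
  have NE: "is_pure_NE u c n S" using iff devv by blast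
  have Np: "0 < real n" using n_pos by simp
  have agg: "aggregate n S = real n *\<^sub>R v" by (rule G.agg_sym) (use Sv in auto)
  have pv: "potential u c n (aggregate n S) = G.psi v"
    unfolding agg G.potential_psi using Np by simp
  have uniq: "\<forall>T. is_pure_NE u c n T \<longrightarrow> (\<forall>i\<in>{1..n}. T i = S i)"
  proof (intro allI impI ballI)
    fix T i assume T: "is_pure_NE u c n T" and i: "i \<in> {1..n}"
    have one: "1 \<in> {1..n}" using n_pos by simp
    have Tk: "\<And>k. k \<in> {1..n} \<Longrightarrow> T k = T 1" using G.NE_sym[OF T _ one] by blast
    have T1: "T 1 \<in> unit_simplex" using T one unfolding is_pure_NE_def by blast
    have iffT: "is_pure_NE u c n T \<longleftrightarrow> (\<forall>w\<in>unit_simplex. G.gv (T 1) w \<le> G.gv (T 1) (T 1))"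
      by (rule G.sym_NE_iff[where S=T and v="T 1", OF Tk T1])
    have dev: "\<forall>w\<in>unit_simplex. G.gv (T 1) w \<le> G.gv (T 1) (T 1)"
      using iffT T by blast
    have m1: "\<And>z. z \<in> unit_simplex \<Longrightarrow> G.psi z \<le> G.psi (T 1)"
      using G.dev_imp_max[OF T1] dev by blast
    have "T 1 = v" by (rule G.umax) (use T1 v m1 mx in auto)
    then show "T i = S i" using Tk[OF i] Sv[OF i] by simp
  qed
  have sym: "\<forall>i\<in>{1..n}. S i = (1 / real n) *\<^sub>R aggregate n S"
    using Sv agg Np by simp
  have inscaled: "aggregate n S \<in> scaled_simplex n"
  proof -
    have "(\<Sum>x\<in>UNIV. real n * v $ x) = real n * (\<Sum>x\<in>UNIV. v $ x)" by (simp add: sum_distrib_left)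
    moreover have "(\<Sum>x\<in>UNIV. v $ x) = 1" by (rule simplex_sum[OF v])
    moreover have "\<forall>x. 0 \<le> real n * v $ x" using simplex_nonneg[OF v] Np by simp
    ultimately show ?thesis unfolding agg scaled_simplex_def by simp
  qed
  have potmax: "\<forall>s\<in>scaled_simplex n. potential u c n s \<le> potential u c n (aggregate n S)"
  proof
    fix s :: "real^'e" assume s: "s \<in> scaled_simplex n"
    have sS: "(1 / real n) *\<^sub>R s \<in> unit_simplex" by (rule scaled_to_simplex[OF s n_pos])
    have ps: "potential u c n s = G.psi ((1 / real n) *\<^sub>R s)" by (rule G.potential_psi)
    show "potential u c n s \<le> potential u c n (aggregate n S)"
      using mx[OF sS] ps pv by linarith
  qed
  have potuniq: "\<forall>s\<in>scaled_simplex n. potential u c n s = potential u c n (aggregate n S) \<longrightarrow> s = aggregate n S"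
  proof (intro ballI impI)
    fix s :: "real^'e" assume s: "s \<in> scaled_simplex n" and eq: "potential u c n s = potential u c n (aggregate n S)"
    have sS: "(1 / real n) *\<^sub>R s \<in> unit_simplex" by (rule scaled_to_simplex[OF s n_pos])
    have ps: "potential u c n s = G.psi ((1 / real n) *\<^sub>R s)" by (rule G.potential_psi)
    have "G.psi ((1 / real n) *\<^sub>R s) = G.psi v" using eq ps pv by linarith
    then have m1: "\<And>z. z \<in> unit_simplex \<Longrightarrow> G.psi z \<le> G.psi ((1 / real n) *\<^sub>R s)" using mx by simp
    have "(1 / real n) *\<^sub>R s = v" by (rule G.umax) (use sS v m1 mx in auto)
    then have "real n *\<^sub>R ((1 / real n) *\<^sub>R s) = real n *\<^sub>R v" by simp
    then show "s = aggregate n S" unfolding agg using Np by simp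
  qed
  show ?thesis using NE uniq sym inscaled potmax potuniq by blast
qed

end
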